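(* For every $d \ge 14$ with $d \equiv 2 \pmod 4$, the complement of the graph $\mathrm{Cay}\big(\mathrm{Dih}(\tfrac{d+6}{2}),\ \{r^{\pm 2}, s, r^8 s, r^9 s\}\big)$ is a $d$-regular Cayley nut graph of order $d+6$.
   Context: $\mathrm{Dih}(m) = \langle r, s \mid r^m = s^2 = e,\ srs = r^{-1}\rangle$ is the dihedral group of order $2m$. For a finite group $\Gamma$ with identity $e$ and $C \subseteq \Gamma\setminus\{e\}$ closed under inversion, $\mathrm{Cay}(\Gamma, C)$ is the graph with vertex set $\Gamma$ in which $u,v$ are adjacent iff $vu^{-1}\in C$. The complement of a graph $G$ has the same vertex set, with two distinct vertices adjacent iff they are not adjacent in $G$. A nut graph is a graph with at least two vertices whose adjacency matrix has eigenvalue $0$ with multiplicity exactly one, such that the corresponding eigenvector has no zero entries. *)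

theory Defs
  imports Complex_Main "HOL-Algebra.Group"
begin

text \<open>Concrete model of the dihedral group Dih(m) of order 2m: the pair (k, b)
  stands for r^k s^b with 0 <= k < m.  Multiplication follows srs = r^{-1}:
  r^a s^x * r^b s^y = r^(a + (-1)^x b) s^(x+y).\<close>

definition dih_mult :: "nat \<Rightarrow> nat \<times> bool \<Rightarrow> nat \<times> bool \<Rightarrow> nat \<times> bool" where
  "dih_mult m u v =
     (case u of (a, x) \<Rightarrow> case v of (b, y) \<Rightarrow>
        ((if x then a + (m - b) else a + b) mod m, x \<noteq> y))"

definition Dih :: "nat \<Rightarrow> (nat \<times> bool) monoid" where
  "Dih m = \<lparr> carrier = {..<m} \<times> (UNIV :: bool set), mult = dih_mult m, one = (0, False) \<rparr>"

definition dih_r :: "nat \<Rightarrow> nat \<times> bool" where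
  "dih_r m = (1 mod m, False)"

definition dih_s :: "nat \<times> bool" where
  "dih_s = (0, True)"

definition cay_adj :: "('a, 'b) monoid_scheme \<Rightarrow> 'a set \<Rightarrow> 'a \<Rightarrow> 'a \<Rightarrow> bool" where
  "cay_adj G C u v \<longleftrightarrow> v \<otimes>\<^bsub>G\<^esub> inv\<^bsub>G\<^esub> u \<in> C"

definition is_cayley_connection_set :: "('a, 'b) monoid_scheme \<Rightarrow> 'a set \<Rightarrow> bool" where
  "is_cayley_connection_set G C \<longleftrightarrow>
     C \<subseteq> carrier G - {\<one>\<^bsub>G\<^esub>} \<and> (\<forall>c\<in>C. inv\<^bsub>G\<^esub> c \<in> C)"

definition compl_adj :: "'a set \<Rightarrow> ('a \<Rightarrow> 'a \<Rightarrow> bool) \<Rightarrow> 'a \<Rightarrow> 'a \<Rightarrow> bool" where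
  "compl_adj V E u v \<longleftrightarrow> u \<in> V \<and> v \<in> V \<and> u \<noteq> v \<and> \<not> E u v"

definition regular_graph :: "'a set \<Rightarrow> ('a \<Rightarrow> 'a \<Rightarrow> bool) \<Rightarrow> nat \<Rightarrow> bool" where
  "regular_graph V E k \<longleftrightarrow> (\<forall>v\<in>V. card {u\<in>V. E v u} = k)"

definition adj_kernel :: "'a set \<Rightarrow> ('a \<Rightarrow> 'a \<Rightarrow> bool) \<Rightarrow> ('a \<Rightarrow> real) set" where
  "adj_kernel V E = {x. \<forall>v\<in>V. (\<Sum>u\<in>{u\<in>V. E v u}. x u) = 0}"

text \<open>Nut graph: at least two vertices, eigenvalue 0 of the (symmetric) adjacency
  matrix has multiplicity one, i.e. the null space is spanned by one vector x,
  and that eigenvector has no zero entries.\<close>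
definition nut_graph :: "'a set \<Rightarrow> ('a \<Rightarrow> 'a \<Rightarrow> bool) \<Rightarrow> bool" where
  "nut_graph V E \<longleftrightarrow> finite V \<and> card V \<ge> 2 \<and>
     (\<exists>x \<in> adj_kernel V E. (\<forall>v\<in>V. x v \<noteq> 0) \<and>
        (\<forall>y \<in> adj_kernel V E. \<exists>c::real. \<forall>v\<in>V. y v = c * x v))"

end

theory Submission
  imports Defs "Berlekamp_Zassenhaus.Factor_Bound" "HOL-Computational_Algebra.Fundamental_Theorem_Algebra"
begin

lemma base_mod_p:
  fixes c p :: int and T :: "int poly"
  assumes "[:c:] + smult p T = 0"
  shows "p dvd c"
proof -
  have "coeff ([:c:] + smult p T) 0 = 0" using assms by simp
  hence "c + p * coeff T 0 = 0" by simp
  hence "c = p * (- coeff T 0)" by simp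
  thus ?thesis by simp
qed

lemma monic_mod_p:
  fixes F0 Y T :: "int poly" and c p :: int
  assumes lc: "lead_coeff F0 = 1" and dg: "degree F0 \<ge> 1"
    and eq: "F0 * Y = [:c:] + smult p T"
  shows "p dvd c"
  using eq
proof (induction "degree Y" arbitrary: Y T rule: less_induct)
  case less
  show ?case
  proof (cases "Y = 0")
    case True
    then show ?thesis using less.prems base_mod_p by simp
  next
    case False
    let ?e = "degree Y"
    have "coeff (F0*Y) (degree F0 + ?e) = lead_coeff Y"
      using coeff_mult_degree_sum[of F0 Y] lc by simp
    moreover have "coeff ([:c:] + smult p T) (degree F0 + ?e) = p * coeff T (degree F0 + ?e)"
      using dg by (cases "degree F0 + ?e") (auto simp: coeff_pCons)
    ultimately have l0: "lead_coeff Y = p * coeff T (degree F0 + ?e)" using less.prems by simp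
    define l where "l = coeff T (degree F0 + ?e)"
    define Y' where "Y' = Y - monom (lead_coeff Y) ?e"
    have m: "monom (lead_coeff Y) ?e = smult p (monom l ?e)" by (simp add: l0 l_def smult_monom)
    have "F0 * Y' = F0 * Y - smult p (F0 * monom l ?e)"
      by (simp add: Y'_def m right_diff_distrib mult_smult_right)
    then have eq': "F0 * Y' = [:c:] + smult p (T - F0 * monom l ?e)"
      using less.prems by (simp add: smult_diff_right)
    show ?thesis
    proof (cases "Y' = 0")
      case True
      then show ?thesis using eq' base_mod_p by simp
    next
      case False
      have "?e \<noteq> 0"
      proof
        assume "?e = 0"
        then have "Y = monom (lead_coeff Y) 0" by (metis degree_0_id monom_0)
        then show False using False \<open>?e = 0\<close> by (simp add: Y'_def)
      qed
      have "degree Y' < ?e"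
      proof (rule degree_lessI)
        show "Y' \<noteq> 0 \<or> 0 < ?e" using False by simp
        show "\<forall>k\<ge>?e. coeff Y' k = 0"
          by (auto simp: Y'_def coeff_monom coeff_eq_0)
      qed
      then show ?thesis using less.hyps eq' by blast
    qed
  qed
qed

definition pcong :: "int \<Rightarrow> int poly \<Rightarrow> int poly \<Rightarrow> bool" where
  "pcong p A B \<longleftrightarrow> (\<exists>S. A - B = smult p S)"

lemma pcong_refl: "pcong p A A" unfolding pcong_def by (rule exI[of _ 0]) simp
lemma pcong_sym: "pcong p A B \<Longrightarrow> pcong p B A"
  unfolding pcong_def by (metis minus_diff_eq smult_minus_right)
lemma pcong_trans: "pcong p A B \<Longrightarrow> pcong p B C \<Longrightarrow> pcong p A C"
  unfolding pcong_def by (metis diff_add_cancel add_diff_eq smult_add_right add.commute diff_add_eq)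
lemma pcong_add: "pcong p A B \<Longrightarrow> pcong p A' B' \<Longrightarrow> pcong p (A + A') (B + B')"
  unfolding pcong_def by (metis (no_types, lifting) add_diff_add smult_add_right)
lemma pcong_mult: "pcong p A B \<Longrightarrow> pcong p A' B' \<Longrightarrow> pcong p (A * A') (B * B')"
proof -
  assume "pcong p A B" "pcong p A' B'"
  then obtain S S' where S: "A - B = smult p S" and S': "A' - B' = smult p S'" unfolding pcong_def by blast
  have "A * A' - B * B' = A * (A' - B') + (A - B) * B'" by (simp add: algebra_simps)
  also have "\<dots> = smult p (A * S' + S * B')" by (simp only: S S' mult_smult_right mult_smult_left smult_add_right)
  finally show ?thesis unfolding pcong_def by blast
qed
lemma pcong_power: "pcong p A B \<Longrightarrow> pcong p (A ^ k) (B ^ k)"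
  by (induction k) (auto intro: pcong_mult pcong_refl)

lemma pcong_smult_p: "pcong p (smult p S) 0" unfolding pcong_def by auto

lemma freshman_pcong:
  fixes A B :: "int poly" and p :: nat
  assumes p: "prime p"
  shows "pcong (int p) ((A + B) ^ p) (A ^ p + B ^ p)"
proof -
  have p0: "p > 0" using p prime_gt_0_nat by blast
  have "(A + B) ^ p = (\<Sum>k\<le>p. of_nat (p choose k) * A ^ k * B ^ (p - k))"
    by (rule binomial_ring)
  also have "{..p} = insert p (insert 0 {1..<p})" using p0 by auto
  also have "(\<Sum>k\<in>insert p (insert 0 {1..<p}). of_nat (p choose k) * A ^ k * B ^ (p - k))
      = A ^ p + (B ^ p + (\<Sum>k\<in>{1..<p}. of_nat (p choose k) * A ^ k * B ^ (p - k)))"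
    using p0 by (subst sum.insert; auto)+
  finally have e: "(A + B) ^ p - (A ^ p + B ^ p) = (\<Sum>k\<in>{1..<p}. of_nat (p choose k) * A ^ k * B ^ (p - k))"
    by simp
  have "\<forall>k\<in>{1..<p}. of_nat (p choose k) * A ^ k * B ^ (p - k) = smult (int p) (of_nat ((p choose k) div p) * A ^ k * B ^ (p - k))"
  proof
    fix k assume k: "k \<in> {1..<p}"
    have "p dvd (p choose k)" using k p0 p by (intro dvd_choose_prime) auto
    then have "p choose k = p * ((p choose k) div p)" by simp
    note pk = this
    have "of_nat (p choose k) * A ^ k * B ^ (p - k) = smult (int (p choose k)) (A^k * B^(p-k))"
      by (simp add: of_nat_poly mult.assoc)
    also have "int (p choose k) = int p * int ((p choose k) div p)" using pk by (metis of_nat_mult)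
    also have "smult (int p * int ((p choose k) div p)) (A^k*B^(p-k)) = smult (int p) (of_nat ((p choose k) div p) * A ^ k * B ^ (p - k))"
      by (simp add: of_nat_poly mult.assoc)
    finally show "of_nat (p choose k) * A ^ k * B ^ (p - k) = smult (int p) (of_nat ((p choose k) div p) * A ^ k * B ^ (p - k))" .
  qed
  then have "(\<Sum>k\<in>{1..<p}. of_nat (p choose k) * A ^ k * B ^ (p - k)) = smult (int p) (\<Sum>k\<in>{1..<p}. of_nat ((p choose k) div p) * A ^ k * B ^ (p - k))"
    by (simp add: smult_sum2)
  from trans[OF e this] show ?thesis unfolding pcong_def by blast
qed

lemma fermat_nat:
  fixes a p :: nat
  assumes p: "prime p"
  shows "[a ^ p = a] (mod p)"
proof (cases "p dvd a")
  case True
  have "a dvd a ^ p" using prime_gt_0_nat[OF p] by (simp add: dvd_power)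
  then have "p dvd a ^ p" using True by (meson dvd_trans)
  then show ?thesis using True by (simp add: cong_def dvd_eq_mod_eq_0)
next
  case False
  have "[a ^ (p - 1) = 1] (mod p)" using fermat_theorem[OF p False] .
  then have "[a * a ^ (p - 1) = a * 1] (mod p)" by (rule cong_scalar_left)
  moreover have "a * a ^ (p - 1) = a ^ p" using p
    by (metis Suc_diff_1 power_Suc prime_gt_0_nat)
  ultimately show ?thesis by simp
qed

lemma fermat_int:
  fixes a :: int and p :: nat
  assumes p: "prime p"
  shows "int p dvd a ^ p - a"
proof -
  define a' where "a' = nat (a mod int p)"
  have p0: "int p > 0" using prime_gt_0_nat[OF p] by simp
  have a'': "int a' = a mod int p" unfolding a'_def using p0 by simp
  have c1: "[a = int a'] (mod int p)" unfolding a'' cong_def by simp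
  have "[a' ^ p = a'] (mod p)" by (rule fermat_nat[OF p])
  then have "[int (a' ^ p) = int a'] (mod int p)" by (subst cong_int_iff)
  then have c2: "[int a' ^ p = int a'] (mod int p)" by simp
  have "[a ^ p = int a' ^ p] (mod int p)" using c1 by (rule cong_pow)
  then have "[a ^ p = a] (mod int p)" using c1 c2 by (meson cong_sym cong_trans)
  then show ?thesis by (simp add: cong_iff_dvd_diff)
qed

lemma frobenius_pcong:
  fixes H :: "int poly" and p :: nat
  assumes p: "prime p"
  shows "pcong (int p) (H ^ p) (pcompose H (monom 1 p))"
proof (induction H)
  case 0
  then show ?case using prime_gt_0_nat[OF p] by (simp add: pcong_refl power_0_left)
next
  case (pCons a G)
  have x: "pCons a G = [:a:] + monom 1 1 * G" by (metis add_pCons pCons_0_as_mult x_as_monom add_0 add_0_right)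
  have "pcong (int p) ((pCons a G) ^ p) ([:a:] ^ p + (monom 1 1 * G) ^ p)"
    unfolding x by (rule freshman_pcong[OF p])
  moreover have "pcong (int p) ([:a:] ^ p) [:a:]"
  proof -
    obtain t where "a ^ p - a = int p * t" using fermat_int[OF p, of a] by blast
    then have "[:a:] ^ p - [:a:] = smult (int p) [:t:]" by (simp add: poly_const_pow)
    then show ?thesis unfolding pcong_def by blast
  qed
  moreover have "pcong (int p) ((monom 1 1 * G) ^ p) (monom 1 p * pcompose G (monom 1 p))"
  proof -
    have "(monom 1 1 * G) ^ p = monom 1 p * G ^ p" by (simp add: power_mult_distrib monom_power)
    then show ?thesis using pcong_mult[OF pcong_refl pCons.IH] by simp
  qed
  ultimately have "pcong (int p) ((pCons a G) ^ p) ([:a:] + monom 1 p * pcompose G (monom 1 p))"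
    by (meson pcong_add pcong_trans)
  moreover have "pcompose (pCons a G) (monom 1 p) = [:a:] + monom 1 p * pcompose G (monom 1 p)"
    by (simp add: pcompose_pCons)
  ultimately show ?case by simp
qed

interpretation of_rat_poly_hom: map_poly_idom_hom "of_rat :: rat \<Rightarrow> complex" ..

definition ev :: "rat poly \<Rightarrow> complex \<Rightarrow> complex" where
  "ev q w = poly (map_poly of_rat q) w"

lemma ev_mult: "ev (a * b) w = ev a w * ev b w" by (simp add: ev_def of_rat_poly_hom.hom_mult)
lemma ev_add: "ev (a + b) w = ev a w + ev b w" by (simp add: ev_def of_rat_poly_hom.hom_add)
lemma ev_smult: "ev (smult c a) w = of_rat c * ev a w" by (simp add: ev_def hom_distribs)
lemma ev_of_int: "ev (of_int_poly F) w = poly (of_int_poly F) w"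
  by (simp add: ev_def map_poly_map_poly o_def)
lemma ev_pcompose: "ev (pcompose h q) w = ev h (ev q w)"
  by (simp add: ev_def of_rat_hom.map_poly_pcompose poly_pcompose)
lemma ev_monom1: "ev (monom 1 k) w = w ^ k" by (simp add: ev_def poly_monom)

lemma minpoly_exists:
  fixes w :: complex
  assumes "q0 \<noteq> 0" "ev q0 w = 0"
  shows "\<exists>f. lead_coeff f = 1 \<and> ev f w = 0 \<and> (\<forall>q. ev q w = 0 \<longrightarrow> f dvd q)"
proof -
  obtain g where g: "g \<noteq> 0 \<and> ev g w = 0" and gmin: "\<And>q. q \<noteq> 0 \<and> ev q w = 0 \<Longrightarrow> degree g \<le> degree q"
    using ex_has_least_nat[of "\<lambda>q. q \<noteq> 0 \<and> ev q w = 0" q0 degree] assms by blast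
  define f where "f = smult (inverse (lead_coeff g)) g"
  have lf: "lead_coeff f = 1" using g by (simp add: f_def)
  have f0: "f \<noteq> 0" using lf by auto
  have df: "degree f = degree g" using g by (simp add: f_def)
  have ef: "ev f w = 0" using g by (simp add: f_def ev_smult)
  have "f dvd q" if q: "ev q w = 0" for q
  proof (rule ccontr)
    assume nd: "\<not> f dvd q"
    then have m0: "q mod f \<noteq> 0" by (simp add: dvd_eq_mod_eq_0)
    have "q = f * (q div f) + q mod f" by simp
    then have "ev q w = ev f w * ev (q div f) w + ev (q mod f) w"
      by (metis ev_add ev_mult)
    then have "ev (q mod f) w = 0" using q ef by simp
    then have "degree g \<le> degree (q mod f)" using gmin m0 by blast
    moreover have "degree (q mod f) < degree f" using degree_mod_less'[OF f0 m0] .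
    ultimately show False using df by simp
  qed
  then show ?thesis using lf ef by blast
qed

lemma minpoly_eq:
  fixes f h :: "rat poly"
  assumes lf: "lead_coeff f = 1" and ef: "ev f w = 0" and mf: "\<And>q. ev q w = 0 \<Longrightarrow> f dvd q"
    and lh: "lead_coeff h = 1" and eh: "ev h w' = 0" and mh: "\<And>q. ev q w' = 0 \<Longrightarrow> h dvd q"
    and nc: "\<not> is_unit (gcd f h)"
  shows "f = h"
proof -
  define d where "d = gcd f h"
  have f0: "f \<noteq> 0" "h \<noteq> 0" using lf lh by auto
  have d0: "d \<noteq> 0" using f0 by (simp add: d_def)
  have "\<not> is_unit d" using nc by (simp add: d_def)
  then have dd: "degree d \<noteq> 0" using is_unit_iff_degree[OF d0] by blast
  have key: "ev d u = 0"
    if l: "lead_coeff g = 1" and e: "ev g u = 0" and m: "\<And>q. ev q u = 0 \<Longrightarrow> g dvd q" and dg: "d dvd g" for g u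
  proof -
    obtain k where k: "g = d * k" using dg by (auto elim: dvdE)
    have g0: "g \<noteq> 0" using l by auto
    then have k0: "k \<noteq> 0" using k by auto
    have "ev d u * ev k u = 0" using e k ev_mult by metis
    moreover have "ev k u \<noteq> 0"
    proof
      assume "ev k u = 0"
      then have "g dvd k" by (rule m)
      then have "degree g \<le> degree k" using k0 by (simp add: dvd_imp_degree_le)
      moreover have "degree g = degree d + degree k" using k d0 k0 by (simp add: degree_mult_eq)
      ultimately show False using dd by simp
    qed
    ultimately show ?thesis by simp
  qed
  have "ev d w = 0"
  proof (rule key)
    show "lead_coeff f = 1" by (rule lf)
    show "ev f w = 0" by (rule ef)
    show "\<And>q. ev q w = 0 \<Longrightarrow> f dvd q" by (rule mf)
    show "d dvd f" unfolding d_def by (rule gcd_dvd1)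
  qed
  then have "f dvd d" by (rule mf)
  then have fh: "f dvd h" by (metis d_def dvd_trans gcd_dvd2)
  have "ev d w' = 0"
  proof (rule key)
    show "lead_coeff h = 1" by (rule lh)
    show "ev h w' = 0" by (rule eh)
    show "\<And>q. ev q w' = 0 \<Longrightarrow> h dvd q" by (rule mh)
    show "d dvd h" unfolding d_def by (rule gcd_dvd2)
  qed
  then have "h dvd d" by (rule mh)
  then have hf: "h dvd f" by (metis d_def dvd_trans gcd_dvd1)
  have "normalize f = f" "normalize h = h" using lf lh by (simp_all add: normalize_monic)
  then show ?thesis using fh hf by (metis associated_eqI)
qed

lemma gauss_monic:
  fixes P :: "int poly" and g k :: "rat poly"
  assumes lP: "lead_coeff P = 1" and lg: "lead_coeff g = 1" and eq: "of_int_poly P = g * k"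
  shows "\<exists>G K. g = of_int_poly G \<and> k = of_int_poly K \<and> lead_coeff G = 1 \<and> lead_coeff K = 1"
proof -
  have P0: "P \<noteq> 0" using lP by auto
  have "content P dvd coeff P (degree P)" by (rule content_dvd_coeff)
  then have "content P dvd 1" using lP by simp
  then have cP: "content P = 1" using content_ge_0_int[of P] by (simp add: zdvd1_eq)
  obtain r rg where rg: "rat_to_normalized_int_poly g = (r, rg)" by force
  obtain s sk where sk: "rat_to_normalized_int_poly k = (s, sk)" by force
  have Pe: "P = rg * sk" by (rule rat_to_int_factor_content_1[OF cP eq rg sk P0])
  note R = rat_to_normalized_int_poly[OF rg] and S = rat_to_normalized_int_poly[OF sk]
  have "lead_coeff rg * lead_coeff sk = 1" using Pe lP by (simp add: lead_coeff_mult)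
  then have u: "(lead_coeff rg = 1 \<and> lead_coeff sk = 1) \<or> (lead_coeff rg = -1 \<and> lead_coeff sk = -1)"
    by (simp add: zmult_eq_1_iff)
  have lk: "lead_coeff k = 1" using eq lg lP by (metis lead_coeff_mult mult_1 of_int_hom.hom_lead_coeff of_int_hom.hom_one)
  have "lead_coeff g = r * of_int (lead_coeff rg)" using R(1) by (metis lead_coeff_smult of_int_hom.hom_lead_coeff)
  then have a: "r * of_int (lead_coeff rg) = 1" using lg by simp
  have "lead_coeff k = s * of_int (lead_coeff sk)" using S(1) by (metis lead_coeff_smult of_int_hom.hom_lead_coeff)
  then have b: "s * of_int (lead_coeff sk) = 1" using lk by simp
  have l1: "lead_coeff rg = 1 \<and> lead_coeff sk = 1"
  proof (rule ccontr)
    assume "\<not> ?thesis"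
    then have "lead_coeff rg = -1" using u by blast
    then have "r = -1" using a by simp
    then show False using R(2) by simp
  qed
  then have "r = 1" "s = 1" using a b by simp_all
  then have "g = of_int_poly rg" "k = of_int_poly sk" using R(1) S(1) by simp_all
  then show ?thesis using l1 by blast
qed

lemma dvd_power_diff:
  fixes a b c :: "'a :: comm_ring_1"
  assumes "a dvd b - c"
  shows "a dvd b ^ k - c ^ k"
proof (induction k)
  case 0
  then show ?case by simp
next
  case (Suc k)
  have "b ^ Suc k - c ^ Suc k = b * (b ^ k - c ^ k) + (b - c) * c ^ k"
    by (simp add: algebra_simps)
  then show ?case using Suc assms by (simp add: dvd_add dvd_mult dvd_mult2)
qed

lemma key_conj:
  fixes z :: complex and n p :: nat and F :: "int poly"
  assumes n0: "n > 0" and zn: "z ^ n = 1" and p: "prime p" and pn: "\<not> p dvd n"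
    and F: "poly (of_int_poly F) z = 0"
  shows "poly (of_int_poly F) (z ^ p) = 0"
proof -
  have p0: "p > 0" using p prime_gt_0_nat by blast
  define XI :: "int poly" where "XI = [:-1:] + monom 1 n"
  define X :: "rat poly" where "X = of_int_poly XI"
  have lXI: "lead_coeff XI = 1" unfolding XI_def
    using n0 by (subst lead_coeff_add_le) (simp_all add: degree_monom_eq)
  have X0: "X \<noteq> 0" using lXI by (auto simp: X_def)
  have evX: "ev X w = w ^ n - 1" for w
    by (simp add: X_def XI_def map_poly_monom poly_monom of_int_poly_hom.hom_add ev_def of_rat_poly_hom.hom_add)
  obtain f where lf: "lead_coeff f = 1" and ef: "ev f z = 0" and mf: "\<And>q. ev q z = 0 \<Longrightarrow> f dvd q"
    using minpoly_exists[OF X0, of z] evX zn by auto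
  have "ev X (z ^ p) = 0" using evX zn by (simp add: power_mult[symmetric] mult.commute power_mult)
  then obtain h where lh: "lead_coeff h = 1" and eh: "ev h (z ^ p) = 0" and mh: "\<And>q. ev q (z ^ p) = 0 \<Longrightarrow> h dvd q"
    using minpoly_exists[OF X0, of "z ^ p"] by auto
  define Fr :: "rat poly" where "Fr = of_int_poly F"
  have "ev Fr z = 0" using F by (simp add: Fr_def ev_of_int)
  then have fF: "f dvd Fr" by (rule mf)
  show ?thesis
  proof (cases "is_unit (gcd f h)")
    case False
    have "f = h" by (rule minpoly_eq[OF lf ef mf lh eh mh False])
    then have "h dvd Fr" using fF by simp
    then obtain k where "Fr = h * k" by (auto elim: dvdE)
    then have "ev Fr (z ^ p) = 0" using eh by (simp add: ev_mult)
    then show ?thesis by (simp add: Fr_def ev_of_int)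
  next
    case True
    then have cop: "algebraic_semidom_class.coprime f h" by (metis is_unit_gcd)
    have "f dvd X" "h dvd X" using evX zn \<open>ev X (z ^ p) = 0\<close> by (auto intro: mf mh)
    then have "f * h dvd X" using cop by (simp add: divides_mult)
    then obtain q where Xe: "X = f * h * q" by (auto elim: dvdE)
    have "lead_coeff X = 1" using lXI by (simp add: X_def)
    then have lq: "lead_coeff q = 1" using Xe lf lh by (simp add: lead_coeff_mult)
    obtain F0 where F0: "f = of_int_poly F0" and lF0: "lead_coeff F0 = 1"
      using gauss_monic[OF lXI lf, of "h * q"] Xe X_def by (auto simp: mult.assoc)
    obtain H0 where H0: "h = of_int_poly H0" and lH0: "lead_coeff H0 = 1"
      using gauss_monic[OF lXI lh, of "f * q"] Xe X_def by (auto simp: ac_simps)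
    obtain Q0 where Q0: "q = of_int_poly Q0"
      using gauss_monic[OF lXI lq, of "f * h"] Xe X_def by (auto simp: ac_simps)
    have e1: "F0 * H0 * Q0 = XI"
    proof -
      have "(of_int_poly (F0 * H0 * Q0) :: rat poly) = of_int_poly XI"
        using Xe X_def F0 H0 Q0 by (simp add: of_int_poly_hom.hom_mult)
      then show ?thesis by (simp only: of_int_poly_hom.eq_iff)
    qed
    define HP where "HP = pcompose H0 (monom 1 p)"
    have HPr: "(of_int_poly HP :: rat poly) = pcompose h (monom 1 p)"
      by (simp add: HP_def H0 of_int_hom.map_poly_pcompose map_poly_monom)
    have lHP: "lead_coeff HP = 1" unfolding HP_def
      using lead_coeff_comp[of "monom 1 p" H0] p0 lH0 by (simp add: degree_monom_eq)
    have "ev (pcompose h (monom 1 p)) z = 0" using eh by (simp add: ev_pcompose ev_monom1)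
    then have "f dvd pcompose h (monom 1 p)" by (rule mf)
    then obtain w where we: "pcompose h (monom 1 p) = f * w" by (auto elim: dvdE)
    obtain W0 where W0: "w = of_int_poly W0"
      using gauss_monic[OF lHP lf, of w] we HPr by auto
    have eW: "F0 * W0 = HP"
    proof -
      have "(of_int_poly (F0 * W0) :: rat poly) = of_int_poly HP"
        using we HPr F0 W0 by (simp add: of_int_poly_hom.hom_mult)
      then show ?thesis by (simp only: of_int_poly_hom.eq_iff)
    qed
    obtain S where S: "H0 ^ p - HP = smult (int p) S"
      using frobenius_pcong[OF p, of H0] unfolding pcong_def HP_def by blast
    define U where "U = smult (int n) (H0 * Q0) - monom 1 1 * pderiv (H0 * Q0)"
    define V where "V = - (monom 1 1 * pderiv F0 * Q0)"
    have dXI: "pderiv XI = monom (int n) (n - 1)"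
      by (simp add: XI_def pderiv_add pderiv_monom)
    have mm: "monom 1 1 * monom (int n) (n - 1) = monom (int n) n"
      using n0 by (simp add: mult_monom)
    have bez: "F0 * U + H0 * V = [:- int n:]"
    proof -
      have "F0 * U + H0 * V = smult (int n) (F0 * (H0 * Q0)) - monom 1 1 * (F0 * pderiv (H0 * Q0) + H0 * Q0 * pderiv F0)"
        by (simp add: U_def V_def algebra_simps)
      also have "F0 * pderiv (H0 * Q0) + H0 * Q0 * pderiv F0 = pderiv XI"
        using e1 by (metis pderiv_mult mult.assoc)
      also have "F0 * (H0 * Q0) = XI" using e1 by (simp add: mult.assoc)
      also have "smult (int n) XI - monom 1 1 * pderiv XI = [:- int n:]"
        unfolding dXI mm by (simp add: XI_def smult_add_right smult_monom)
      finally show ?thesis .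
    qed
    have "F0 dvd H0 * V - [:- int n:]"
    proof -
      have "H0 * V - [:- int n:] = F0 * (- U)" using bez by (simp add: algebra_simps)
      then show ?thesis by simp
    qed
    then have "F0 dvd (H0 * V) ^ p - [:- int n:] ^ p" by (rule dvd_power_diff)
    then obtain Z where Z: "(H0 * V) ^ p - [:- int n:] ^ p = F0 * Z" by (auto elim: dvdE)
    have "(H0 * V) ^ p = F0 * W0 * V ^ p + smult (int p) (S * V ^ p)"
    proof -
      have "H0 ^ p = F0 * W0 + smult (int p) S" using S eW by (simp add: algebra_simps)
      then show ?thesis by (simp add: power_mult_distrib algebra_simps)
    qed
    then have "F0 * (W0 * V ^ p - Z) = [:(- int n) ^ p:] + smult (int p) (- (S * V ^ p))"
      using Z by (simp add: algebra_simps poly_const_pow)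
    moreover have "degree F0 \<ge> 1"
    proof (rule ccontr)
      assume "\<not> degree F0 \<ge> 1"
      then have "degree F0 = 0" by simp
      then have "F0 = [:1:]" using lF0 by (metis degree_0_id)
      then have "f = 1" using F0 by simp
      then show False using ef by (simp add: ev_def)
    qed
    ultimately have "int p dvd (- int n) ^ p"
      using monic_mod_p[OF lF0] by blast
    moreover have "prime (int p)" using p by simp
    ultimately have "int p dvd - int n" using prime_dvd_power by blast
    then have "p dvd n" by simp
    then show ?thesis using pn by simp
  qed
qed

definition Rl :: "int list" where
  "Rl = [1, 3, 5, 7, 9, 10, 11, 10, 10, 10, 11, 10, 9, 7, 5, 3, 1]"

fun evl :: "int list \<Rightarrow> complex \<Rightarrow> complex" where
  "evl [] z = 0"
| "evl (a # xs) z = of_int a + z * evl xs z"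

fun pl :: "int list \<Rightarrow> int poly" where
  "pl [] = 0"
| "pl (a # xs) = pCons a (pl xs)"

lemma evl_poly: "poly (of_int_poly (pl xs)) z = evl xs z"
  by (induction xs) (simp_all add: of_int_hom.map_poly_pCons_hom)

definition spread :: "int list \<Rightarrow> int list" where
  "spread xs = concat (map (\<lambda>a. [a, 0]) xs)"

lemma evl_spread: "evl (spread xs) z = evl xs (z ^ 2)"
  by (induction xs) (simp_all add: spread_def power2_eq_square algebra_simps)

fun negalt :: "int list \<Rightarrow> int list" where
  "negalt [] = []"
| "negalt (a # xs) = a # map uminus (negalt xs)"

lemma evl_uminus: "evl (map uminus xs) z = - evl xs z"
  by (induction xs) (simp_all add: algebra_simps)

lemma evl_negalt: "evl (negalt xs) z = evl xs (- z)"
  by (induction xs) (simp_all add: evl_uminus algebra_simps)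

lemma cert1: "pl [-98, -268, -128, -403, -297, -574, -349, -750, -579, -738, -492, -1051, -643, -735, -528, -1015, -414, -733, -656, -1010, -494, -863, -569, -771, -487, -636, -328, -441, -294, -277, -142, -137] * pl Rl + pl [220, 562, 762, 1127, 1518, 1577, 1383, 1281, 1310, 1502, 1538, 1319, 1135, 977, 553, 137] * pl (spread Rl) = [:122:]"
  unfolding Rl_def spread_def by code_simp

lemma cert2: "pl [686806, -625053, -1169383, 526907, 2366024, -180850, -5039998, 2134579, 4490249, -443727, -6988439, 2233692, 5934617, -1180874, -7018673, 3101969, 5008881, -1226458, -7059038, 3077587, 5938504, -1956853, -6501645, 2724649, 5139328, -2233511, -3601574, 1143851, 2931015, -1164404, -1473076, 906928] * pl Rl + pl [230872, -1435365, 303128, -3007230, -150689, -4453524, -1067413, -4085290, -1150395, -3292771, -2399411, -2446432, -2164043, -1671792, -1247708, -906928] * pl (spread (negalt Rl)) = [:917678:]"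
  unfolding Rl_def spread_def by code_simp

lemma cert3: "pl [38, -41, -67, 165, -215, 237, -196, 196, -215, 236, -234, 279, -253, 199, -129, 43] * pl Rl + pl [38, 41, -67, -165, -215, -237, -196, -196, -215, -236, -234, -279, -253, -199, -129, -43] * pl (negalt Rl) = [:76:]"
  unfolding Rl_def spread_def by code_simp

lemma cert_eval:
  assumes "pl U * pl Rl + pl V * pl W = [:c:]" and "evl Rl z = 0" and "evl W z = 0"
  shows "c = 0"
proof -
  have "poly (of_int_poly (pl U * pl Rl + pl V * pl W)) z = of_int c"
    using assms(1) by (simp add: of_int_hom.map_poly_pCons_hom)
  then have "evl U z * evl Rl z + evl V z * evl W z = of_int c"
    by (simp add: of_int_poly_hom.hom_add of_int_poly_hom.hom_mult evl_poly)
  then show ?thesis using assms(2,3) by simp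
qed

lemma orbit:
  fixes z :: complex and F :: "int poly"
  assumes n0: "n > 0" and zn: "z ^ n = 1" and Fz: "poly (of_int_poly F) z = 0"
  shows "algebraic_semidom_class.coprime k n \<Longrightarrow> poly (of_int_poly F) (z ^ k) = 0"
proof (induction k rule: less_induct)
  case (less k)
  show ?case
  proof (cases "k \<le> 1")
    case True
    then consider "k = 0" | "k = 1" by linarith
    then show ?thesis
    proof cases
      case 1
      then have "n = 1" using less.prems by simp
      then have "z = 1" using zn by simp
      then show ?thesis using Fz 1 by simp
    next
      case 2
      then show ?thesis using Fz by simp
    qed
  next
    case False
    then obtain p where p: "prime p" "p dvd k" using prime_factor_nat[of k] by auto
    then obtain k' where k: "k = p * k'" by (auto elim: dvdE)
    have p2: "p \<ge> 2" using p prime_ge_2_nat by blast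
    have k'0: "k' > 0" using k False by (cases k') auto
    have "k' < k" using k p2 k'0 by simp
    moreover have "algebraic_semidom_class.coprime k' n" using less.prems k by simp
    ultimately have IH: "poly (of_int_poly F) (z ^ k') = 0" using less.IH by blast
    have pn: "\<not> p dvd n"
    proof
      assume "p dvd n"
      then have "is_unit p" using coprime_common_divisor[OF less.prems p(2)] by blast
      then show False using p(1) by (simp add: not_prime_unit)
    qed
    have "(z ^ k') ^ n = 1" using zn by (metis mult.commute power_mult power_one)
    from key_conj[OF n0 this p(1) pn IH]
    show ?thesis using k by (simp add: power_mult mult.commute)
  qed
qed

lemma Rl_unity:
  fixes z :: complex
  assumes m0: "m > 0" and zm: "z ^ m = 1"
  shows "evl Rl z \<noteq> 0"
proof
  assume R0: "evl Rl z = 0"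
  define F where "F = pl Rl"
  have Fz: "poly (of_int_poly F) z = 0" using R0 by (simp add: F_def evl_poly)
  define n where "n = (LEAST n. 0 < n \<and> z ^ n = 1)"
  have nP: "0 < n \<and> z ^ n = 1" unfolding n_def by (rule LeastI[of _ m]) (simp add: m0 zm)
  then have n0: "n > 0" and zn: "z ^ n = 1" by auto
  have nmin: "z ^ k \<noteq> 1" if "0 < k" "k < n" for k
    using not_less_Least[of k "\<lambda>n. 0 < n \<and> z ^ n = 1"] that n_def by auto
  have ev: "evl Rl (z ^ k) = 0" if "algebraic_semidom_class.coprime k n" for k
    using orbit[OF n0 zn Fz that] by (simp add: F_def evl_poly)
  show False
  proof (cases "even n")
    case False
    then have "algebraic_semidom_class.coprime 2 n" by simp
    then have "evl Rl (z ^ 2) = 0" by (rule ev)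
    then have "evl (spread Rl) z = 0" by (simp add: evl_spread)
    then have "(122::int) = 0" using cert_eval[OF cert1 R0] by blast
    then show False by simp
  next
    case True
    then obtain h where h: "n = 2 * h" by (auto elim: evenE)
    have h0: "h > 0" using h n0 by simp
    have "z ^ h \<noteq> 1" using nmin h0 h by simp
    moreover have "(z ^ h) ^ 2 = 1" using zn h by (simp add: power_mult[symmetric] mult.commute)
    ultimately have zh: "z ^ h = -1" by (simp add: power2_eq_1_iff)
    show False
    proof (cases "even h")
      case False
      have c1: "algebraic_semidom_class.coprime (h + 2) 2" using False by simp
      have g: "gcd (h + 2) h = gcd 2 h" by (metis add.commute gcd_add1)
      have "algebraic_semidom_class.coprime 2 h" using False by simp
      then have c2: "algebraic_semidom_class.coprime (h + 2) h" using g by (simp only: coprime_iff_gcd_eq_1)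
      have "algebraic_semidom_class.coprime (h + 2) n" using c1 c2 h by (simp add: coprime_mult_right_iff)
      then have "evl Rl (z ^ (h + 2)) = 0" by (rule ev)
      moreover have "z ^ (h + 2) = - (z ^ 2)" using zh by (simp add: power_add power2_eq_square)
      ultimately have "evl Rl (- (z ^ 2)) = 0" by simp
      then have "evl (spread (negalt Rl)) z = 0" by (simp add: evl_spread evl_negalt)
      then have "(917678::int) = 0" using cert_eval[OF cert2 R0] by blast
      then show False by simp
    next
      case True
      have c1: "algebraic_semidom_class.coprime (h + 1) 2" using True by simp
      have c2: "algebraic_semidom_class.coprime (h + 1) h" by simp
      have "algebraic_semidom_class.coprime (h + 1) n" using c1 c2 h by (simp add: coprime_mult_right_iff)
      then have "evl Rl (z ^ (h + 1)) = 0" by (rule ev)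
      moreover have "z ^ (h + 1) = - z" using zh by (simp add: power_add)
      ultimately have "evl Rl (- z) = 0" by simp
      then have "evl (negalt Rl) z = 0" by (simp add: evl_negalt)
      then have "(76::int) = 0" using cert_eval[OF cert3 R0] by blast
      then show False by simp
    qed
  qed
qed

definition op :: "real poly \<Rightarrow> (int \<Rightarrow> real) \<Rightarrow> int \<Rightarrow> real" where
  "op P a k = (\<Sum>i\<le>degree P. coeff P i * a (k - int i))"

lemma op_le:
  assumes "degree P \<le> N"
  shows "op P a k = (\<Sum>i\<le>N. coeff P i * a (k - int i))"
  unfolding op_def
  by (rule sum.mono_neutral_left) (use assms in \<open>auto simp: coeff_eq_0\<close>)

lemma op_add: "op (P + Q) a k = op P a k + op Q a k"
proof -
  define N where "N = max (degree P) (degree Q)"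
  have "degree (P + Q) \<le> N" unfolding N_def by (rule degree_add_le_max)
  then have "op (P + Q) a k = (\<Sum>i\<le>N. coeff (P + Q) i * a (k - int i))" by (rule op_le)
  also have "\<dots> = (\<Sum>i\<le>N. coeff P i * a (k - int i)) + (\<Sum>i\<le>N. coeff Q i * a (k - int i))"
    by (simp add: algebra_simps sum.distrib)
  also have "\<dots> = op P a k + op Q a k"
  proof -
    have "op P a k = (\<Sum>i\<le>N. coeff P i * a (k - int i))" by (rule op_le) (simp add: N_def)
    moreover have "op Q a k = (\<Sum>i\<le>N. coeff Q i * a (k - int i))" by (rule op_le) (simp add: N_def)
    ultimately show ?thesis by simp
  qed
  finally show ?thesis .
qed

lemma op_uminus: "op (- P) a k = - op P a k"
  by (simp add: op_def sum_negf)

lemma op_diff: "op (P - Q) a k = op P a k - op Q a k"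
  using op_add[of P "- Q" a k] by (simp add: op_uminus)

lemma op_fadd: "op P (\<lambda>k. f k + g k) k = op P f k + op P g k"
  by (simp add: op_def algebra_simps sum.distrib)

lemma op_fdiff: "op P (\<lambda>k. f k - g k) k = op P f k - op P g k"
  by (simp add: op_def algebra_simps sum_subtractf)

lemma op_fzero: "op P (\<lambda>k. 0) k = 0"
  by (simp add: op_def)

lemma op_fconst: "op P (\<lambda>k. c) k = poly P 1 * c"
  by (simp add: op_def poly_altdef sum_distrib_right)

lemma op_pCons: "op (pCons c P) a k = c * a k + op P a (k - 1)"
proof -
  have "degree (pCons c P) \<le> Suc (degree P)" by (simp add: degree_pCons_le)
  then have "op (pCons c P) a k = (\<Sum>i\<le>Suc (degree P). coeff (pCons c P) i * a (k - int i))"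
    by (rule op_le)
  also have "\<dots> = c * a k + (\<Sum>i\<le>degree P. coeff P i * a (k - int (Suc i)))"
    by (subst sum.atMost_Suc_shift) simp
  also have "(\<Sum>i\<le>degree P. coeff P i * a (k - int (Suc i))) = op P a (k - 1)"
    by (simp add: op_def algebra_simps)
  finally show ?thesis .
qed

lemma op_0: "op 0 a k = 0" by (simp add: op_def)

lemma op_smult: "op (smult c P) a k = c * op P a k"
  by (cases "c = 0") (simp_all add: op_def sum_distrib_left mult.assoc op_0)

lemma op_mult: "op (P * Q) a k = op P (op Q a) k"
proof (induction P arbitrary: k)
  case 0
  then show ?case by (simp add: op_0)
next
  case (pCons c P)
  have "pCons c P * Q = smult c Q + pCons 0 (P * Q)" by simp
  then have "op (pCons c P * Q) a k = c * op Q a k + op (P * Q) a (k - 1)"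
    by (simp add: op_add op_smult op_pCons)
  also have "\<dots> = op (pCons c P) (op Q a) k" using pCons.IH by (simp add: op_pCons)
  finally show ?case .
qed

lemma op_1: "op 1 a k = a k" by (simp add: op_def)

lemma op_monom1: "op (monom 1 j) a k = a (k - int j)"
proof (induction j arbitrary: k)
  case 0
  then show ?case by (simp add: op_1 monom_0 one_pCons[symmetric])
next
  case (Suc j)
  have "monom (1::real) (Suc j) = pCons 0 (monom 1 j)" by (simp add: monom_Suc)
  then show ?case using Suc by (simp add: op_pCons algebra_simps)
qed

lemma op_x1: "op [:-1, 1:] a k = a (k - 1) - a k"
  by (simp add: op_pCons op_0 op_1)

lemma op_periodic:
  assumes "\<And>k. a (k + int m) = a k"
  shows "op (monom 1 m - 1) a k = 0"
proof -
  have "a (k - int m) = a k" using assms[of "k - int m"] by simp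
  then show ?thesis by (simp add: op_diff op_monom1 op_1)
qed

lemma op_keeps_periodic:
  assumes "\<And>k. a (k + int m) = a k"
  shows "op P a (k + int m) = op P a k"
proof -
  have "a (k + int m - int i) = a (k - int i)" for i using assms[of "k - int i"] by (simp add: algebra_simps)
  then show ?thesis by (simp add: op_def)
qed

lemma diff_zero_const:
  fixes f :: "int \<Rightarrow> real"
  assumes "\<And>k. f k - f (k - 1) = 0"
  shows "f k = f 0"
proof (induction k rule: int_induct[where k = 0])
  case base then show ?case by simp
next
  case (step1 i) then show ?case using assms[of "i + 1"] by simp
next
  case (step2 i) then show ?case using assms[of i] by simp
qed

lemma diff_const_periodic:
  fixes f :: "int \<Rightarrow> real"
  assumes d: "\<And>k. f k - f (k - 1) = c" and p: "\<And>k. f (k + int m) = f k" and m: "m > 0"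
  shows "c = 0"
proof -
  have "f (int n) = f 0 + real n * c" for n
  proof (induction n)
    case 0 then show ?case by simp
  next
    case (Suc n)
    have "f (int (Suc n)) - f (int (Suc n) - 1) = c" by (rule d)
    then show ?case using Suc by (simp add: algebra_simps)
  qed
  from this[of m] p[of 0] have "real m * c = 0" by simp
  then show ?thesis using m by simp
qed

interpretation of_real_poly_hom2: map_poly_idom_hom "of_real :: real \<Rightarrow> complex" ..

lemma op_mult_fun: "op (P * Q) a = op P (op Q a)"
  by (rule ext) (rule op_mult)

abbreviation rp :: "int poly \<Rightarrow> real poly" where "rp \<equiv> of_int_poly"

lemma evl_real: "poly (map_poly of_real (rp (pl xs))) z = evl xs z"
  by (simp add: map_poly_map_poly o_def evl_poly)

lemma bezout_R:
  assumes m: "m > 0"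
  shows "\<exists>U V :: real poly. U * rp (pl Rl) + V * (monom 1 m - 1) = 1"
proof -
  define Rr where "Rr = rp (pl Rl)"
  define X :: "real poly" where "X = monom 1 m - 1"
  define g where "g = gcd Rr X"
  have "is_unit g"
  proof (rule ccontr)
    assume nu: "\<not> is_unit g"
    have "Rr \<noteq> 0" unfolding Rr_def Rl_def by simp
    then have g0: "g \<noteq> 0" by (simp add: g_def)
    then have "degree g \<noteq> 0" using nu is_unit_iff_degree by blast
    define gc where "gc = map_poly (of_real :: real \<Rightarrow> complex) g"
    have "degree gc \<noteq> 0" using \<open>degree g \<noteq> 0\<close> by (simp add: gc_def degree_map_poly)
    then have "\<not> constant (poly gc)" by (simp add: constant_degree)
    then obtain z where z: "poly gc z = 0" using fundamental_theorem_of_algebra by blast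
    have "g dvd Rr" by (simp add: g_def)
    then obtain k1 where k1: "Rr = g * k1" by (rule dvdE)
    have "g dvd X" by (simp add: g_def)
    then obtain k2 where k2: "X = g * k2" by (rule dvdE)
    have "poly (map_poly of_real Rr) z = 0"
      using z by (simp add: k1 gc_def of_real_poly_hom2.hom_mult)
    then have e1: "evl Rl z = 0" by (simp add: Rr_def evl_real)
    have "poly (map_poly of_real X) z = 0"
      using z by (simp add: k2 gc_def of_real_poly_hom2.hom_mult)
    then have "z ^ m = 1" by (simp add: X_def of_real_poly_hom2.hom_minus map_poly_monom poly_monom)
    then show False using Rl_unity[OF m] e1 by blast
  qed
  then have "g = 1" by (metis g_def is_unit_gcd_iff)
  then show ?thesis
    using bezout_coefficients_fst_snd[of Rr X] by (auto simp: g_def Rr_def X_def)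
qed

lemma seq_const:
  fixes a :: "int \<Rightarrow> real"
  assumes m: "m > 0" and per: "\<And>k. a (k + int m) = a k"
    and z: "\<And>k. op (rp ([:-1, 1:] ^ 3)) a k = 0"
  shows "a k = a 0"
proof -
  define x1 :: "real poly" where "x1 = [:-1, 1:]"
  have r: "rp ([:-1, 1:] ^ 3) = x1 * (x1 * x1)"
  proof -
    have "rp ([:-1, 1:] ^ 3) = (rp [:-1, 1:]) ^ 3" by (rule of_int_poly_hom.hom_power)
    also have "rp [:-1, 1:] = x1" by (simp add: x1_def)
    finally show ?thesis by (simp only: power3_eq_cube mult.assoc)
  qed
  have ox: "\<And>f k. op x1 f k = f (k - 1) - f k" unfolding x1_def by (rule op_x1)
  define g1 where "g1 = op x1 a"
  define g2 where "g2 = op x1 g1"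
  have pg1: "g1 (k + int m) = g1 k" for k unfolding g1_def using per by (rule op_keeps_periodic)
  have pg2: "g2 (k + int m) = g2 k" for k unfolding g2_def using pg1 by (rule op_keeps_periodic)
  have "op x1 g2 k = 0" for k using z[of k] unfolding r g2_def g1_def by (simp add: op_mult_fun)
  then have "g2 k - g2 (k - 1) = 0" for k by (simp add: ox)
  then have c2: "g2 k = g2 0" for k by (rule diff_zero_const)
  have "g1 k - g1 (k - 1) = - g2 0" for k using c2[of k] by (simp add: g2_def ox)
  then have "- g2 0 = 0" using diff_const_periodic[of g1 "- g2 0" m] pg1 m by blast
  then have "g1 k - g1 (k - 1) = 0" for k using c2[of k] by (simp add: g2_def ox)
  then have c1: "g1 k = g1 0" for k by (rule diff_zero_const)
  have "a k - a (k - 1) = - g1 0" for k using c1[of k] by (simp add: g1_def ox)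
  then have "- g1 0 = 0" using diff_const_periodic[of a "- g1 0" m] per m by blast
  then have "a k - a (k - 1) = 0" for k using c1[of k] by (simp add: g1_def ox)
  then show ?thesis by (rule diff_zero_const)
qed

definition "P2i = ([:1, 0, 1, 0, 1:] :: int poly)"
definition "Qx2i = ([:0, 0, 1, 0, 0, 0, 0, 0, 0, 0, 1, 1:] :: int poly)"
definition "x7P2i = ([:0, 0, 0, 0, 0, 0, 0, 1, 0, 1, 0, 1:] :: int poly)"
definition "Qti = ([:1, 1, 0, 0, 0, 0, 0, 0, 0, 1:] :: int poly)"
definition "Mi = [:0, 0, 1:] * (pl Rl * [:-1, 1:] ^ 3)"

lemma ident1: "[:-1, 1:] * x7P2i * P2i - [:-1, 1:] * Qx2i * Qti = - Mi"
  unfolding P2i_def Qx2i_def x7P2i_def Qti_def Mi_def Rl_def by code_simp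

lemma ident2: "[:-1, 1:] * Qti * Qx2i - [:-1, 1:] * P2i * x7P2i = Mi"
  unfolding P2i_def Qx2i_def x7P2i_def Qti_def Mi_def Rl_def by code_simp

lemma opP2: "op (rp P2i) f k = f k + f (k - 2) + f (k - 4)"
  by (simp add: P2i_def of_int_hom.map_poly_pCons_hom op_pCons op_0 op_1 algebra_simps)
lemma opQx2: "op (rp Qx2i) f k = f (k - 2) + f (k - 10) + f (k - 11)"
  by (simp add: Qx2i_def of_int_hom.map_poly_pCons_hom op_pCons op_0 op_1 algebra_simps)
lemma opx7P2: "op (rp x7P2i) f k = f (k - 7) + f (k - 9) + f (k - 11)"
  by (simp add: x7P2i_def of_int_hom.map_poly_pCons_hom op_pCons op_0 op_1 algebra_simps)
lemma opQt: "op (rp Qti) f k = f k + f (k - 1) + f (k - 9)"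
  by (simp add: Qti_def of_int_hom.map_poly_pCons_hom op_pCons op_0 op_1 algebra_simps)
lemma opX2: "op (rp [:0, 0, 1:]) f k = f (k - 2)"
  by (simp add: of_int_hom.map_poly_pCons_hom op_pCons op_0 op_1 algebra_simps)

lemma Mi_const:
  fixes f :: "int \<Rightarrow> real"
  assumes m: "m > 0" and per: "\<And>k. f (k + int m) = f k"
    and z: "\<And>k. op (rp Mi) f k = 0"
  shows "f k = f 0"
proof -
  define g where "g = op (rp ([:-1, 1:] ^ 3)) f"
  have pg: "g (k + int m) = g k" for k unfolding g_def using per by (rule op_keeps_periodic)
  have "rp Mi = rp [:0, 0, 1:] * (rp (pl Rl) * rp ([:-1, 1:] ^ 3))"
    by (simp only: Mi_def of_int_poly_hom.hom_mult)
  note rm = this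
  have "op (rp Mi) f k = op (rp (pl Rl)) g (k - 2)" for k
    unfolding rm g_def by (simp only: op_mult op_mult_fun opX2)
  then have h: "op (rp (pl Rl)) g (k - 2) = 0" for k using z[of k] by simp
  have R0: "op (rp (pl Rl)) g k = 0" for k using h[of "k + 2"] by simp
  obtain U V where UV: "U * rp (pl Rl) + V * (monom 1 m - 1) = 1" using bezout_R[OF m] by blast
  have gz: "g k = 0" for k
  proof -
    have "g k = op 1 g k" by (simp add: op_1)
    also have "\<dots> = op (U * rp (pl Rl) + V * (monom 1 m - 1)) g k" by (simp only: UV)
    also have "\<dots> = op U (op (rp (pl Rl)) g) k + op V (op (monom 1 m - 1) g) k"
      by (simp only: op_add op_mult)
    also have "op (rp (pl Rl)) g = (\<lambda>k. 0)" using R0 by (simp add: fun_eq_iff)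
    also have "op (monom 1 m - 1) g = (\<lambda>k. 0)" using op_periodic[of g m] pg by (simp add: fun_eq_iff)
    finally show "g k = 0" by (simp add: op_fzero)
  qed
  show ?thesis by (rule seq_const[of m f, OF m per]) (use gz in \<open>simp add: g_def\<close>)
qed

lemma seq_main:
  fixes a b :: "int \<Rightarrow> real"
  assumes m: "m > 0" and pa: "\<And>k. a (k + int m) = a k" and pb: "\<And>k. b (k + int m) = b k"
    and E1: "\<And>k. a k + a (k + 2) + a (k - 2) + b k + b (k - 8) + b (k - 9) = T"
    and E2: "\<And>k. b k + b (k + 2) + b (k - 2) + a k + a (k + 8) + a (k + 9) = T"
  shows "a k = a 0 \<and> b k = b 0"
proof -
  have e1: "(\<lambda>k. op (rp P2i) a k + op (rp Qx2i) b k) = (\<lambda>k. T)"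
  proof
    fix k show "op (rp P2i) a k + op (rp Qx2i) b k = T"
      using E1[of "k - 2"] by (simp add: opP2 opQx2 algebra_simps)
  qed
  have e2: "(\<lambda>k. op (rp x7P2i) b k + op (rp Qti) a k) = (\<lambda>k. T)"
  proof
    fix k show "op (rp x7P2i) b k + op (rp Qti) a k = T"
      using E2[of "k - 9"] by (simp add: opx7P2 opQt algebra_simps)
  qed
  have kill: "op (rp ([:-1, 1:] * A)) (\<lambda>k. T) k = 0" for A k
    by (simp add: op_fconst of_int_poly_hom.hom_mult)
  define x1 :: "int poly" where "x1 = [:-1, 1:]"
  have z1: "op (rp (x1 * x7P2i) * rp P2i) a k + op (rp (x1 * x7P2i) * rp Qx2i) b k = 0" for k
    using kill[of x7P2i k] arg_cong[OF e1, of "\<lambda>f. op (rp ([:-1, 1:] * x7P2i)) f k"]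
    by (simp add: op_fadd op_mult x1_def)
  have z2: "op (rp (x1 * Qx2i) * rp x7P2i) b k + op (rp (x1 * Qx2i) * rp Qti) a k = 0" for k
    using kill[of Qx2i k] arg_cong[OF e2, of "\<lambda>f. op (rp ([:-1, 1:] * Qx2i)) f k"]
    by (simp add: op_fadd op_mult x1_def)
  have z3: "op (rp (x1 * Qti) * rp P2i) a k + op (rp (x1 * Qti) * rp Qx2i) b k = 0" for k
    using kill[of Qti k] arg_cong[OF e1, of "\<lambda>f. op (rp ([:-1, 1:] * Qti)) f k"]
    by (simp add: op_fadd op_mult x1_def)
  have z4: "op (rp (x1 * P2i) * rp x7P2i) b k + op (rp (x1 * P2i) * rp Qti) a k = 0" for k
    using kill[of P2i k] arg_cong[OF e2, of "\<lambda>f. op (rp ([:-1, 1:] * P2i)) f k"]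
    by (simp add: op_fadd op_mult x1_def)
  have ident1': "x1 * x7P2i * P2i - x1 * Qx2i * Qti = - Mi" using ident1 by (simp only: x1_def)
  have ident2': "x1 * Qti * Qx2i - x1 * P2i * x7P2i = Mi" using ident2 by (simp only: x1_def)
  have c0: "x1 * x7P2i * Qx2i - x1 * Qx2i * x7P2i = 0" by (simp add: ac_simps)
  have c0': "x1 * Qti * P2i - x1 * P2i * Qti = 0" by (simp add: ac_simps)
  have "op (rp (- Mi)) a k = 0" for k
  proof -
    have "op (rp (- Mi)) a k = op (rp (x1 * x7P2i * P2i - x1 * Qx2i * Qti)) a k + op (rp (x1 * x7P2i * Qx2i - x1 * Qx2i * x7P2i)) b k"
      by (simp only: ident1' c0 of_int_poly_hom.hom_zero op_0 add_0_right)
    also have "\<dots> = (op (rp (x1 * x7P2i) * rp P2i) a k + op (rp (x1 * x7P2i) * rp Qx2i) b k) - (op (rp (x1 * Qx2i) * rp x7P2i) b k + op (rp (x1 * Qx2i) * rp Qti) a k)"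
      by (simp only: of_int_poly_hom.hom_minus of_int_poly_hom.hom_mult op_diff, (linarith)?)
    also have "\<dots> = 0" using z1[of k] z2[of k] by simp
    finally show ?thesis .
  qed
  then have za: "op (rp Mi) a k = 0" for k using op_uminus[of "rp Mi" a k] by (simp add: of_int_poly_hom.hom_uminus)
  have zb: "op (rp Mi) b k = 0" for k
  proof -
    have "op (rp Mi) b k = op (rp (x1 * Qti * Qx2i - x1 * P2i * x7P2i)) b k + op (rp (x1 * Qti * P2i - x1 * P2i * Qti)) a k"
      by (simp only: ident2' c0' of_int_poly_hom.hom_zero op_0 add_0_right)
    also have "\<dots> = (op (rp (x1 * Qti) * rp P2i) a k + op (rp (x1 * Qti) * rp Qx2i) b k) - (op (rp (x1 * P2i) * rp x7P2i) b k + op (rp (x1 * P2i) * rp Qti) a k)"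
      by (simp only: of_int_poly_hom.hom_minus of_int_poly_hom.hom_mult op_diff, (linarith)?)
    also have "\<dots> = 0" using z3[of k] z4[of k] by simp
    finally show ?thesis .
  qed
  show ?thesis using Mi_const[OF m pa za] Mi_const[OF m pb zb] by blast
qed

lemma dih_mult_simp: "dih_mult m (a, x) (b, y) = ((if x then a + (m - b) else a + b) mod m, x \<noteq> y)"
  by (simp add: dih_mult_def)

lemma dih_fst:
  assumes "b \<le> m"
  shows "int (fst (dih_mult m (a, x) (b, y))) = (int a + (if x then - int b else int b)) mod int m"
proof (cases x)
  case True
  have "int ((a + (m - b)) mod m) = (int a + int m - int b) mod int m"
    using assms by (simp add: of_nat_mod of_nat_diff)
  also have "\<dots> = (int a - int b) mod int m"
    by (metis add_diff_eq diff_add_eq mod_add_self2 add.commute diff_diff_eq2)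
  finally show ?thesis using True by (simp add: dih_mult_simp)
next
  case False
  then show ?thesis by (simp add: dih_mult_simp of_nat_mod)
qed

lemma Dih_carrier: "carrier (Dih m) = {..<m} \<times> (UNIV :: bool set)"
  by (simp add: Dih_def)
lemma Dih_mult: "x \<otimes>\<^bsub>Dih m\<^esub> y = dih_mult m x y"
  by (simp add: Dih_def)
lemma Dih_one: "\<one>\<^bsub>Dih m\<^esub> = (0, False)"
  by (simp add: Dih_def)

lemma Dih_group:
  assumes m: "m > 0"
  shows "group (Dih m)"
proof (rule groupI)
  fix x y assume "x \<in> carrier (Dih m)" "y \<in> carrier (Dih m)"
  then show "x \<otimes>\<^bsub>Dih m\<^esub> y \<in> carrier (Dih m)"
    using m by (cases x, cases y) (auto simp: Dih_carrier Dih_mult dih_mult_simp)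
next
  show "\<one>\<^bsub>Dih m\<^esub> \<in> carrier (Dih m)" using m by (simp add: Dih_carrier Dih_one)
next
  fix x y z assume xc: "x \<in> carrier (Dih m)" and yc: "y \<in> carrier (Dih m)" and zc: "z \<in> carrier (Dih m)"
  obtain a s where x: "x = (a, s)" and a: "a < m" using xc by (cases x) (auto simp: Dih_carrier)
  obtain b t where y: "y = (b, t)" and b: "b < m" using yc by (cases y) (auto simp: Dih_carrier)
  obtain c u where z: "z = (c, u)" and c: "c < m" using zc by (cases z) (auto simp: Dih_carrier)
  define xy where "xy = dih_mult m (a, s) (b, t)"
  define yz where "yz = dih_mult m (b, t) (c, u)"
  have xy_le: "fst xy < m" using m by (simp add: xy_def dih_mult_simp)
  have yz_le: "fst yz < m" using m by (simp add: yz_def dih_mult_simp)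
  have sxy: "xy = (fst xy, s \<noteq> t)" by (simp add: xy_def dih_mult_simp)
  have syz: "yz = (fst yz, t \<noteq> u)" by (simp add: yz_def dih_mult_simp)
  have L: "int (fst (dih_mult m xy (c, u))) = (int a + (if s then - int b else int b) + (if s \<noteq> t then - int c else int c)) mod int m"
  proof -
    have "int (fst (dih_mult m xy (c, u))) = (int (fst xy) + (if s \<noteq> t then - int c else int c)) mod int m"
      using c by (subst sxy, subst dih_fst) auto
    also have "int (fst xy) = (int a + (if s then - int b else int b)) mod int m"
      using b by (simp add: xy_def dih_fst)
    finally show ?thesis by (simp add: mod_add_left_eq)
  qed
  have R: "int (fst (dih_mult m (a, s) yz)) = (int a + (if s then - int b else int b) + (if s \<noteq> t then - int c else int c)) mod int m"
  proof -
    have "int (fst (dih_mult m (a, s) yz)) = (int a + (if s then - int (fst yz) else int (fst yz))) mod int m"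
      using yz_le by (subst syz, subst dih_fst) auto
    also have "int (fst yz) = (int b + (if t then - int c else int c)) mod int m"
      using c by (simp add: yz_def dih_fst)
    finally show ?thesis
      by (cases s; cases t; simp add: mod_add_right_eq mod_diff_right_eq algebra_simps)
  qed
  have "fst (dih_mult m xy (c, u)) = fst (dih_mult m (a, s) yz)" using L R by simp
  moreover have "snd (dih_mult m xy (c, u)) = snd (dih_mult m (a, s) yz)"
    by (subst sxy, subst syz) (simp add: dih_mult_simp, blast)
  ultimately have "dih_mult m xy (c, u) = dih_mult m (a, s) yz" by (simp add: prod_eq_iff)
  then show "x \<otimes>\<^bsub>Dih m\<^esub> y \<otimes>\<^bsub>Dih m\<^esub> z = x \<otimes>\<^bsub>Dih m\<^esub> (y \<otimes>\<^bsub>Dih m\<^esub> z)"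
    by (simp add: x y z Dih_mult xy_def yz_def)
next
  fix x assume "x \<in> carrier (Dih m)"
  then show "\<one>\<^bsub>Dih m\<^esub> \<otimes>\<^bsub>Dih m\<^esub> x = x"
    by (cases x) (auto simp: Dih_carrier Dih_mult Dih_one dih_mult_simp)
next
  fix x assume xc: "x \<in> carrier (Dih m)"
  obtain a s where x: "x = (a, s)" and a: "a < m" using xc by (cases x) (auto simp: Dih_carrier)
  show "\<exists>y\<in>carrier (Dih m). y \<otimes>\<^bsub>Dih m\<^esub> x = \<one>\<^bsub>Dih m\<^esub>"
  proof (cases s)
    case True
    then show ?thesis using a by (intro bexI[of _ "(a, True)"]) (auto simp: x Dih_carrier Dih_mult Dih_one dih_mult_simp)
  next
    case False
    then show ?thesis using a m
      by (intro bexI[of _ "((m - a) mod m, False)"]) (auto simp: x Dih_carrier Dih_mult Dih_one dih_mult_simp mod_add_left_eq)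
  qed
qed

lemma (in group) right_set_C:
  assumes C: "C \<subseteq> carrier G" and v: "v \<in> carrier G"
  shows "{u \<in> carrier G. u \<otimes> inv v \<in> C} = (\<lambda>c. c \<otimes> v) ` C"
proof
  show "{u \<in> carrier G. u \<otimes> inv v \<in> C} \<subseteq> (\<lambda>c. c \<otimes> v) ` C"
  proof
    fix u assume u: "u \<in> {u \<in> carrier G. u \<otimes> inv v \<in> C}"
    then have "u = (u \<otimes> inv v) \<otimes> v" using v by (simp add: m_assoc)
    then show "u \<in> (\<lambda>c. c \<otimes> v) ` C" using u by blast
  qed
  show "(\<lambda>c. c \<otimes> v) ` C \<subseteq> {u \<in> carrier G. u \<otimes> inv v \<in> C}"
  proof
    fix u assume "u \<in> (\<lambda>c. c \<otimes> v) ` C"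
    then obtain c where c: "c \<in> C" "u = c \<otimes> v" by blast
    then have cc: "c \<in> carrier G" using C by blast
    have "u \<otimes> inv v = c" using c cc v by (simp add: m_assoc)
    then show "u \<in> {u \<in> carrier G. u \<otimes> inv v \<in> C}" using c cc v by simp
  qed
qed

lemma (in group) inj_right_C:
  assumes C: "C \<subseteq> carrier G" and v: "v \<in> carrier G"
  shows "inj_on (\<lambda>c. c \<otimes> v) C"
proof (rule inj_onI)
  fix x y assume "x \<in> C" "y \<in> C" "x \<otimes> v = y \<otimes> v"
  then show "x = y" using right_cancel[of v x y] C v by blast
qed

lemma (in group) notin_right_C:
  assumes C: "C \<subseteq> carrier G" and v: "v \<in> carrier G" and one: "\<one> \<notin> C"
  shows "v \<notin> (\<lambda>c. c \<otimes> v) ` C"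
proof
  assume "v \<in> (\<lambda>c. c \<otimes> v) ` C"
  then obtain c where c: "c \<in> C" "v = c \<otimes> v" by blast
  then have "\<one> \<otimes> v = c \<otimes> v" using v by simp
  then have "c = \<one>" using c C v right_cancel[of v "\<one>" c] by auto
  then show False using c one by simp
qed

lemma (in group) nbr_set:
  assumes C: "C \<subseteq> carrier G" and v: "v \<in> carrier G" and one: "\<one> \<notin> C"
  shows "{u \<in> carrier G. compl_adj (carrier G) (cay_adj G C) v u} = carrier G - insert v ((\<lambda>c. c \<otimes> v) ` C)"
proof -
  have "{u \<in> carrier G. compl_adj (carrier G) (cay_adj G C) v u} = carrier G - insert v {u \<in> carrier G. u \<otimes> inv v \<in> C}"
    using v by (auto simp: compl_adj_def cay_adj_def)
  then show ?thesis using right_set_C[OF C v] by simp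
qed

lemma (in group) nbr_sum:
  fixes y :: "'a \<Rightarrow> real"
  assumes C: "C \<subseteq> carrier G" and v: "v \<in> carrier G" and one: "\<one> \<notin> C" and fin: "finite (carrier G)"
  shows "(\<Sum>u\<in>{u \<in> carrier G. compl_adj (carrier G) (cay_adj G C) v u}. y u)
       = (\<Sum>u\<in>carrier G. y u) - y v - (\<Sum>c\<in>C. y (c \<otimes> v))"
proof -
  let ?I = "(\<lambda>c. c \<otimes> v) ` C"
  have sub: "insert v ?I \<subseteq> carrier G" using C v by auto
  have finC: "finite C" using C fin finite_subset by blast
  have "(\<Sum>u\<in>carrier G - insert v ?I. y u) = (\<Sum>u\<in>carrier G. y u) - (\<Sum>u\<in>insert v ?I. y u)"
    by (rule sum_diff[OF fin sub])
  also have "(\<Sum>u\<in>insert v ?I. y u) = y v + (\<Sum>u\<in>?I. y u)"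
    using notin_right_C[OF C v one] finC by simp
  also have "(\<Sum>u\<in>?I. y u) = (\<Sum>c\<in>C. y (c \<otimes> v))"
    using inj_right_C[OF C v] by (simp add: sum.reindex)
  finally show ?thesis using nbr_set[OF C v one] by simp
qed

lemma (in group) nbr_card:
  assumes C: "C \<subseteq> carrier G" and v: "v \<in> carrier G" and one: "\<one> \<notin> C" and fin: "finite (carrier G)"
  shows "card {u \<in> carrier G. compl_adj (carrier G) (cay_adj G C) v u} = card (carrier G) - 1 - card C"
proof -
  let ?I = "(\<lambda>c. c \<otimes> v) ` C"
  have sub: "insert v ?I \<subseteq> carrier G" using C v by auto
  have finC: "finite C" using C fin finite_subset by blast
  have "card (carrier G - insert v ?I) = card (carrier G) - card (insert v ?I)"
    by (rule card_Diff_subset[OF finite_subset[OF sub fin] sub])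
  also have "card (insert v ?I) = Suc (card ?I)"
    using notin_right_C[OF C v one] finC by simp
  also have "card ?I = card C" using inj_right_C[OF C v] by (simp add: card_image)
  finally show ?thesis using nbr_set[OF C v one] by simp
qed

definition idx :: "nat \<Rightarrow> int \<Rightarrow> nat" where
  "idx m t = nat (t mod int m)"

lemma idx_lt: "m > 0 \<Longrightarrow> idx m t < m"
  unfolding idx_def by (simp add: nat_less_iff)

lemma idx_int: "m > 0 \<Longrightarrow> int (idx m t) = t mod int m"
  unfolding idx_def by simp

lemma idx_conv:
  assumes "m > 0" "int a mod int m = t mod int m"
  shows "a mod m = idx m t"
proof -
  have "int (a mod m) = t mod int m" using assms by (simp add: of_nat_mod)
  then show ?thesis unfolding idx_def by (metis nat_int)
qed

lemma idx_add: "m > 0 \<Longrightarrow> (c + idx m k) mod m = idx m (k + int c)"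
  by (rule idx_conv) (simp_all add: idx_int mod_add_right_eq add.commute)

lemma idx_sub:
  assumes "m > 0" "c \<le> m"
  shows "(m - c + idx m k) mod m = idx m (k - int c)"
proof (rule idx_conv[OF assms(1)])
  have "int (m - c + idx m k) = int m + (k mod int m - int c)" using assms by (simp add: idx_int)
  also have "\<dots> mod int m = (k mod int m - int c) mod int m" by simp
  also have "\<dots> = (k - int c) mod int m" by (simp add: mod_diff_left_eq)
  finally show "int (m - c + idx m k) mod int m = (k - int c) mod int m" .
qed

lemma idx_neg:
  assumes "m > 0"
  shows "(c + (m - idx m k)) mod m = idx m (int c - k)"
proof (rule idx_conv[OF assms(1)])
  have le: "idx m k \<le> m" using idx_lt[OF assms, of k] by simp
  have "int (c + (m - idx m k)) = int m + (int c - k mod int m)" using assms le by (simp add: idx_int of_nat_diff)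
  also have "\<dots> mod int m = (int c - k mod int m) mod int m" by simp
  also have "\<dots> = (int c - k) mod int m" by (simp add: mod_diff_right_eq)
  finally show "int (c + (m - idx m k)) mod int m = (int c - k) mod int m" .
qed

lemma idx_neg0:
  assumes "m > 0"
  shows "(m - idx m k) mod m = idx m (- k)"
  using idx_neg[OF assms, of 0 k] by simp

lemma idx_of_nat: "j < m \<Longrightarrow> idx m (int j) = j"
  unfolding idx_def by (simp add: zmod_int)

lemma idx_period: "idx m (k + int m) = idx m k"
  unfolding idx_def by simp

theorem mainTheorem14:
  fixes d :: nat
  assumes "d \<ge> 14" and "d mod 4 = 2"
  defines "m \<equiv> (d + 6) div 2"
  defines "G \<equiv> Dih m"
  defines "r \<equiv> dih_r m"
  defines "s \<equiv> dih_s"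
  defines "C \<equiv> {r [^]\<^bsub>G\<^esub> (2::nat), inv\<^bsub>G\<^esub> (r [^]\<^bsub>G\<^esub> (2::nat)), s,
                 r [^]\<^bsub>G\<^esub> (8::nat) \<otimes>\<^bsub>G\<^esub> s, r [^]\<^bsub>G\<^esub> (9::nat) \<otimes>\<^bsub>G\<^esub> s}"
  defines "H \<equiv> compl_adj (carrier G) (cay_adj G C)"
  shows "card (carrier G) = d + 6
       \<and> regular_graph (carrier G) H d
       \<and> (\<exists>C'. is_cayley_connection_set G C' \<and>
              (\<forall>u\<in>carrier G. \<forall>v\<in>carrier G. H u v \<longleftrightarrow> cay_adj G C' u v))
       \<and> nut_graph (carrier G) H"
proof -
  have m10: "m \<ge> 10" using assms(1) unfolding m_def by simp
  have d6: "d + 6 = 2 * m" using assms(2) unfolding m_def by presburger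
  have m0: "m > 0" using m10 by simp
  interpret grp: group G unfolding G_def by (rule Dih_group[OF m0])
  have carr: "carrier G = {..<m} \<times> (UNIV :: bool set)" by (simp add: G_def Dih_carrier)
  have mult: "x \<otimes>\<^bsub>G\<^esub> y = dih_mult m x y" for x y by (simp add: G_def Dih_mult)
  have one: "\<one>\<^bsub>G\<^esub> = (0, False)" by (simp add: G_def Dih_one)
  have r1: "r = (1, False)" using m10 by (simp add: r_def dih_r_def)
  have rpow: "r [^]\<^bsub>G\<^esub> (k::nat) = (k mod m, False)" for k
  proof (induction k)
    case 0
    then show ?case using one by simp
  next
    case (Suc k)
    have "r [^]\<^bsub>G\<^esub> (Suc k) = r [^]\<^bsub>G\<^esub> k \<otimes>\<^bsub>G\<^esub> r" by simp
    also have "\<dots> = dih_mult m (k mod m, False) (1, False)" unfolding Suc.IH by (simp add: mult r1)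
    also have "\<dots> = (Suc k mod m, False)" by (simp add: dih_mult_simp mod_Suc_eq)
    finally show ?case .
  qed
  have r2: "r [^]\<^bsub>G\<^esub> (2::nat) = (2, False)" using rpow[of 2] m10 by simp
  have mm2: "Suc (Suc (m - 2)) = m" using m10 by simp
  have ir2: "inv\<^bsub>G\<^esub> (2, False) = (m - 2, False)"
    by (rule grp.inv_equality) (use m10 in \<open>auto simp: mult dih_mult_simp one carr mm2\<close>)
  have s8: "r [^]\<^bsub>G\<^esub> (8::nat) \<otimes>\<^bsub>G\<^esub> s = (8, True)"
    using m10 by (simp add: rpow mult dih_mult_simp s_def dih_s_def)
  have s9: "r [^]\<^bsub>G\<^esub> (9::nat) \<otimes>\<^bsub>G\<^esub> s = (9, True)"
    using m10 by (simp add: rpow mult dih_mult_simp s_def dih_s_def)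
  have C_eq: "C = {(2, False), (m - 2, False), (0, True), (8, True), (9, True)}"
    unfolding C_def r2 ir2 s8 s9 by (simp add: s_def dih_s_def)
  have Csub: "C \<subseteq> carrier G" using m10 by (auto simp: C_eq carr)
  have oneC: "\<one>\<^bsub>G\<^esub> \<notin> C" using m10 by (auto simp: C_eq one)
  have cardC: "card C = 5" using m10 by (simp add: C_eq)
  have invT: "inv\<^bsub>G\<^esub> (k, True) = (k, True)" if "k < m" for k
    by (rule grp.inv_equality) (use that in \<open>auto simp: mult dih_mult_simp one carr\<close>)
  have ir2': "inv\<^bsub>G\<^esub> (m - 2, False) = (2, False)"
    using ir2 grp.inv_inv[of "(2, False)"] m10 by (simp add: carr)
  have invC: "inv\<^bsub>G\<^esub> c \<in> C" if "c \<in> C" for c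
    using that m10 ir2 ir2' invT by (auto simp: C_eq)
  have fin: "finite (carrier G)" by (simp add: carr)
  have cardV: "card (carrier G) = 2 * m" by (simp add: carr card_cartesian_product)
  have P1: "card (carrier G) = d + 6" using cardV d6 by simp
  have P2: "regular_graph (carrier G) H d"
    unfolding regular_graph_def H_def
  proof
    fix v assume v: "v \<in> carrier G"
    show "card {u \<in> carrier G. compl_adj (carrier G) (cay_adj G C) v u} = d"
      using grp.nbr_card[OF Csub v oneC fin] cardV cardC d6 by simp
  qed
  define C' where "C' = carrier G - {\<one>\<^bsub>G\<^esub>} - C"
  have P3: "is_cayley_connection_set G C' \<and> (\<forall>u\<in>carrier G. \<forall>v\<in>carrier G. H u v \<longleftrightarrow> cay_adj G C' u v)"
  proof
    show "is_cayley_connection_set G C'"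
      unfolding is_cayley_connection_set_def
    proof
      show "C' \<subseteq> carrier G - {\<one>\<^bsub>G\<^esub>}" by (auto simp: C'_def)
      show "\<forall>c\<in>C'. inv\<^bsub>G\<^esub> c \<in> C'"
      proof
        fix c assume c: "c \<in> C'"
        then have cc: "c \<in> carrier G" and c1: "c \<noteq> \<one>\<^bsub>G\<^esub>" and cC: "c \<notin> C" by (auto simp: C'_def)
        have "inv\<^bsub>G\<^esub> c \<noteq> \<one>\<^bsub>G\<^esub>"
        proof
          assume "inv\<^bsub>G\<^esub> c = \<one>\<^bsub>G\<^esub>"
          then have "inv\<^bsub>G\<^esub> (inv\<^bsub>G\<^esub> c) = \<one>\<^bsub>G\<^esub>" by simp
          then show False using cc c1 by simp
        qed
        moreover have "inv\<^bsub>G\<^esub> c \<notin> C"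
        proof
          assume "inv\<^bsub>G\<^esub> c \<in> C"
          then have "inv\<^bsub>G\<^esub> (inv\<^bsub>G\<^esub> c) \<in> C" by (rule invC)
          then show False using cc cC by simp
        qed
        ultimately show "inv\<^bsub>G\<^esub> c \<in> C'" using cc by (simp add: C'_def)
      qed
    qed
    show "\<forall>u\<in>carrier G. \<forall>v\<in>carrier G. H u v \<longleftrightarrow> cay_adj G C' u v"
    proof (intro ballI)
      fix u v assume u: "u \<in> carrier G" and v: "v \<in> carrier G"
      have "v \<otimes>\<^bsub>G\<^esub> inv\<^bsub>G\<^esub> u = \<one>\<^bsub>G\<^esub> \<longleftrightarrow> v = u"
      proof
        assume "v \<otimes>\<^bsub>G\<^esub> inv\<^bsub>G\<^esub> u = \<one>\<^bsub>G\<^esub>"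
        then show "v = u" using grp.right_cancel[of "inv\<^bsub>G\<^esub> u" v u] u v by simp
      next
        assume "v = u" then show "v \<otimes>\<^bsub>G\<^esub> inv\<^bsub>G\<^esub> u = \<one>\<^bsub>G\<^esub>" using u by simp
      qed
      then show "H u v \<longleftrightarrow> cay_adj G C' u v"
        using u v by (auto simp: H_def compl_adj_def cay_adj_def C'_def)
    qed
  qed
  have Csum: "(\<Sum>c\<in>C. y (c \<otimes>\<^bsub>G\<^esub> (k, b))) = y ((2 + k) mod m, b) + y ((m - 2 + k) mod m, b)
      + y ((m - k) mod m, \<not> b) + y ((8 + (m - k)) mod m, \<not> b) + y ((9 + (m - k)) mod m, \<not> b)"
    for y :: "nat \<times> bool \<Rightarrow> real" and k b
    using m10 by (simp add: C_eq mult dih_mult_simp)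
  have sumV: "(\<Sum>u\<in>carrier G. y u) = (\<Sum>k<m. y (k, False) + y (k, True))" for y :: "nat \<times> bool \<Rightarrow> real"
  proof -
    have "(\<Sum>u\<in>carrier G. y u) = (\<Sum>k<m. \<Sum>b\<in>(UNIV :: bool set). y (k, b))"
      unfolding carr sum.cartesian_product by (simp add: case_prod_beta')
    also have "\<dots> = (\<Sum>k<m. y (k, False) + y (k, True))" by (simp add: UNIV_bool add.commute)
    finally show ?thesis .
  qed
  have nsum: "(\<Sum>u\<in>{u \<in> carrier G. H (k, b) u}. y u) = (\<Sum>u\<in>carrier G. y u) - y (k, b)
      - (y ((2 + k) mod m, b) + y ((m - 2 + k) mod m, b)
      + y ((m - k) mod m, \<not> b) + y ((8 + (m - k)) mod m, \<not> b) + y ((9 + (m - k)) mod m, \<not> b))"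
    if "k < m" for y :: "nat \<times> bool \<Rightarrow> real" and k b
  proof -
    have v: "(k, b) \<in> carrier G" using that by (simp add: carr)
    show ?thesis unfolding H_def using grp.nbr_sum[OF Csub v oneC fin, of y] Csum[of y k b] by simp
  qed
  define x0 :: "nat \<times> bool \<Rightarrow> real" where "x0 = (\<lambda>v. if snd v then -1 else 1)"
  have x0sum: "(\<Sum>u\<in>carrier G. x0 u) = 0" by (simp add: sumV x0_def)
  have x0ker: "x0 \<in> adj_kernel (carrier G) H"
    unfolding adj_kernel_def mem_Collect_eq
  proof
    fix v assume v: "v \<in> carrier G"
    then obtain k b where kb: "v = (k, b)" and k: "k < m" by (cases v) (auto simp: carr)
    show "(\<Sum>u\<in>{u \<in> carrier G. H v u}. x0 u) = 0"
      unfolding kb using nsum[OF k, of x0 b] x0sum by (simp add: x0_def)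
  qed
  have x0nz: "\<forall>v\<in>carrier G. x0 v \<noteq> 0" by (simp add: x0_def)
  have uniq: "\<exists>c. \<forall>v\<in>carrier G. y v = c * x0 v" if y: "y \<in> adj_kernel (carrier G) H" for y
  proof -
    have ker: "(\<Sum>u\<in>{u \<in> carrier G. H (k, b) u}. y u) = 0" if "k < m" for k b
      using y that by (auto simp: adj_kernel_def carr)
    define T where "T = (\<Sum>u\<in>carrier G. y u)"
    define al where "al = (\<lambda>k. y (idx m k, False))"
    define be where "be = (\<lambda>k. y (idx m (- k), True))"
    have pa: "al (k + int m) = al k" for k by (simp add: al_def idx_period)
    have pb: "be (k + int m) = be k" for k
    proof -
      have "idx m (- (k + int m)) = idx m (- k)" using idx_period[of m "- k - int m"] by simp
      then show ?thesis by (simp add: be_def)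
    qed
    have E1: "al k + al (k + 2) + al (k - 2) + be k + be (k - 8) + be (k - 9) = T" for k
    proof -
      define k' where "k' = idx m k"
      have k': "k' < m" unfolding k'_def using idx_lt[OF m0] .
      have e: "T - y (k', False) - (y ((2 + k') mod m, False) + y ((m - 2 + k') mod m, False)
          + y ((m - k') mod m, True) + y ((8 + (m - k')) mod m, True) + y ((9 + (m - k')) mod m, True)) = 0"
        using nsum[OF k', of y False] ker[OF k', of False] by (simp add: T_def)
      have 1: "y (k', False) = al k" by (simp add: al_def k'_def)
      have 2: "y ((2 + k') mod m, False) = al (k + 2)" using idx_add[OF m0, of 2 k] by (simp add: al_def k'_def)
      have 3: "y ((m - 2 + k') mod m, False) = al (k - 2)" using idx_sub[OF m0, of 2 k] m10 by (simp add: al_def k'_def)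
      have 4: "y ((m - k') mod m, True) = be k" using idx_neg0[OF m0, of k] by (simp add: be_def k'_def)
      have 5: "y ((8 + (m - k')) mod m, True) = be (k - 8)" using idx_neg[OF m0, of 8 k] by (simp add: be_def k'_def)
      have 6: "y ((9 + (m - k')) mod m, True) = be (k - 9)" using idx_neg[OF m0, of 9 k] by (simp add: be_def k'_def)
      show ?thesis using e 1 2 3 4 5 6 by linarith
    qed
    have E2: "be k + be (k + 2) + be (k - 2) + al k + al (k + 8) + al (k + 9) = T" for k
    proof -
      define j' where "j' = idx m (- k)"
      have j': "j' < m" unfolding j'_def using idx_lt[OF m0] .
      have e: "T - y (j', True) - (y ((2 + j') mod m, True) + y ((m - 2 + j') mod m, True)
          + y ((m - j') mod m, False) + y ((8 + (m - j')) mod m, False) + y ((9 + (m - j')) mod m, False)) = 0"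
        using nsum[OF j', of y True] ker[OF j', of True] by (simp add: T_def)
      have 1: "y (j', True) = be k" by (simp add: be_def j'_def)
      have 2: "y ((2 + j') mod m, True) = be (k - 2)"
      proof -
        have "(2 + j') mod m = idx m (- k + 2)" using idx_add[OF m0, of 2 "- k"] by (simp add: j'_def)
        also have "- k + 2 = - (k - 2)" by simp
        finally show ?thesis by (simp add: be_def)
      qed
      have 3: "y ((m - 2 + j') mod m, True) = be (k + 2)"
      proof -
        have "(m - 2 + j') mod m = idx m (- k - 2)" using idx_sub[OF m0, of 2 "- k"] m10 by (simp add: j'_def)
        also have "- k - 2 = - (k + 2)" by simp
        finally show ?thesis by (simp add: be_def)
      qed
      have 4: "y ((m - j') mod m, False) = al k" using idx_neg0[OF m0, of "- k"] by (simp add: al_def j'_def)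
      have 5: "y ((8 + (m - j')) mod m, False) = al (k + 8)"
      proof -
        have "(8 + (m - j')) mod m = idx m (8 - - k)" using idx_neg[OF m0, of 8 "- k"] by (simp add: j'_def)
        also have "8 - - k = k + 8" by simp
        finally show ?thesis by (simp add: al_def)
      qed
      have 6: "y ((9 + (m - j')) mod m, False) = al (k + 9)"
      proof -
        have "(9 + (m - j')) mod m = idx m (9 - - k)" using idx_neg[OF m0, of 9 "- k"] by (simp add: j'_def)
        also have "9 - - k = k + 9" by simp
        finally show ?thesis by (simp add: al_def)
      qed
      show ?thesis using e 1 2 3 4 5 6 by linarith
    qed
    have const: "al k = al 0 \<and> be k = be 0" for k by (rule seq_main[OF m0 pa pb E1 E2])
    define a where "a = al 0"
    define b where "b = be 0"
    have yF: "y (j, False) = a" if "j < m" for j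
      using const[of "int j"] idx_of_nat[OF that] by (simp add: al_def a_def)
    have yT: "y (j, True) = b" if "j < m" for j
      using const[of "- int j"] idx_of_nat[OF that] by (simp add: be_def b_def)
    have "T = (\<Sum>k<m. a + b)" unfolding T_def sumV by (rule sum.cong) (simp_all add: yF yT)
    then have Tm: "T = real m * (a + b)" by simp
    have "al 0 + al (0 + 2) + al (0 - 2) + be 0 + be (0 - 8) + be (0 - 9) = T" by (rule E1)
    then have "3 * (a + b) = real m * (a + b)"
      using const[of 2] const[of "-2"] const[of "-8"] const[of "-9"] Tm by (simp add: a_def b_def)
    then have "(real m - 3) * (a + b) = 0" by (simp add: algebra_simps)
    moreover have "real m - 3 \<noteq> 0" using m10 by simp
    ultimately have ab: "b = - a" by simp
    show ?thesis
    proof (intro exI[of _ a] ballI)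
      fix v assume "v \<in> carrier G"
      then obtain j c where v: "v = (j, c)" and j: "j < m" by (cases v) (auto simp: carr)
      show "y v = a * x0 v" using yF[OF j] yT[OF j] ab by (cases c) (simp_all add: v x0_def)
    qed
  qed
  have P4: "nut_graph (carrier G) H"
    unfolding nut_graph_def
  proof (intro conjI)
    show "finite (carrier G)" by (rule fin)
    show "2 \<le> card (carrier G)" using cardV m10 by simp
    show "\<exists>x\<in>adj_kernel (carrier G) H. (\<forall>v\<in>carrier G. x v \<noteq> 0) \<and>
        (\<forall>y\<in>adj_kernel (carrier G) H. \<exists>c. \<forall>v\<in>carrier G. y v = c * x v)"
      using x0ker x0nz uniq by blast
  qed
  show ?thesis using P1 P2 P3 P4 by blast
qed

end
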